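(* Let $k\in\{-1,0,1\}$ and let $a$ be a regular scale factor (extended evenly to negative arguments) with finite particle horizon, i.e. $\int_0^\tau\frac{dt}{a(t)}<\infty$ for $\tau>0$. Then for every $\tau_0>0$, $\lim_{(\tau,t_0)\to(\tau_0,0)}a^2(t_0)S_k^2(\chi_{|t_0|}(\tau))=0$; consequently, defining $g_{\theta\theta}$ and $g_{\phi\phi}$ at points with $\rho=\rho_{\mathcal M_\tau}$ by these limits, $g_{\theta\theta}(\tau,\rho)$ and $g_{\phi\phi}(\tau,\rho,\theta)$ are continuous on $D_{\mathrm{polar}}$ and vanish at $(\tau,\rho_{\mathcal M_\tau})$.
   Context: A function $a:[0,\infty)\to[0,\infty)$ is a regular scale factor if: (a) $a(0)=0$; (b) $a$ is increasing and continuous on $[0,\infty)$, twice continuously differentiable on $(0,\infty)$, with an inverse function on $[0,\infty)$; (c) $\frac{a(t)\ddot a(t)}{\dot a(t)^2}\le1$ for all $t>0$ (presupposing $\dot a(t)\ne0$). Extend $a$ by $a(-t)=a(t)$. $S_1=\sin$, $S_0(\chi)=\chi$, $S_{-1}=\sinh$. For $0<s<\tau$, $\chi_s(\tau)=\int_s^\tau\frac{1}{a(t)}\frac{a(\tau)}{\sqrt{a^2(\tau)-a^2(t)}}dt$. For $\tau>0$, $\rho_{\mathcal M_\tau}=\int_0^\tau\frac{a(t)}{\sqrt{a^2(\tau)-a^2(t)}}dt$; for $0<\rho<2\rho_{\mathcal M_\tau}$, $t_0(\tau,\rho)$ is the unique $t_0\in(-\tau,\tau)$ with $\rho=\int_{t_0}^\tau\frac{a(t)}{\sqrt{a^2(\tau)-a^2(t)}}dt$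 ($t_0=0$ iff $\rho=\rho_{\mathcal M_\tau}$). Define $f(\tau,t_0)=\int_{t_0}^{\tau}\frac{\ddot a(t)}{\dot a(t)^2}\left(\frac{\sqrt{a^2(\tau)-a^2(t_0)}}{\sqrt{a^2(\tau)-a^2(t)}}-1\right)dt$ for $0\le t_0<\tau$, $f(\tau,t_0)=2f(\tau,0)-f(\tau,-t_0)$ for $-\tau<t_0<0$, and $g_{\tau\tau}(\tau,\rho)=-[1-\dot a(\tau)f(\tau,t_0(\tau,\rho))]^2$. Let $\rho_{\max}(\tau)=\inf\{\rho\in(0,2\rho_{\mathcal M_\tau}):g_{\tau\tau}(\tau,\rho)=0\}$ if this set is nonempty, else $2\rho_{\mathcal M_\tau}$. $D_{\mathrm{polar}}=\{(\tau,\rho,\theta,\phi):\tau>0,\ 0<\rho<\rho_{\max}(\tau),\ \theta\in I_\pi,\ \phi\in I_{2\pi}\}$, with $I_\pi,I_{2\pi}$ open intervals of lengths $\pi,2\pi$. For $t_0(\tau,\rho)\ne0$: $g_{\theta\theta}(\tau,\rho)=a^2(t_0)S_k^2(\chi_{|t_0|}(\tau))$ with $t_0=t_0(\tau,\rho)$, and $g_{\phi\phi}(\tau,\rho,\theta)=g_{\theta\theta}(\tau,\rho)\sin^2\theta$ (angular metric coefficients of the extended Robertson–Walker metric $ds^2=g_{\tau\tau}d\tau^2+d\rho^2+g_{\theta\theta}d\theta^2+g_{\phi\phi}d\phi^2$ in Fermi polar coordinates). *)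

theory Defs
  imports "HOL-Analysis.Analysis"
begin

text \<open>Regular scale factor (conditions (a)-(c)), for a function on the reals whose
  restriction to [0,oo) is the scale factor; the even extension is a separate hypothesis.\<close>
definition regular_scale_factor :: "(real \<Rightarrow> real) \<Rightarrow> bool" where
  "regular_scale_factor a \<longleftrightarrow>
     a 0 = 0 \<and>
     strict_mono_on {0..} a \<and>
     continuous_on {0..} a \<and>
     bij_betw a {0..} {0..} \<and>
     (\<forall>t>0. (a has_real_derivative deriv a t) (at t)) \<and>
     (\<forall>t>0. (deriv a has_real_derivative deriv (deriv a) t) (at t)) \<and>
     continuous_on {0<..} (deriv (deriv a)) \<and>
     (\<forall>t>0. deriv a t \<noteq> 0 \<and> a t * deriv (deriv a) t / (deriv a t)\<^sup>2 \<le> 1)"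

definition S :: "int \<Rightarrow> real \<Rightarrow> real" where
  "S k x = (if k = 1 then sin x else if k = 0 then x else sinh x)"

definition chi :: "(real \<Rightarrow> real) \<Rightarrow> real \<Rightarrow> real \<Rightarrow> real" where
  "chi a s \<tau> = integral {s..\<tau>} (\<lambda>t. (1 / a t) * (a \<tau> / sqrt ((a \<tau>)\<^sup>2 - (a t)\<^sup>2)))"

definition rhoM :: "(real \<Rightarrow> real) \<Rightarrow> real \<Rightarrow> real" where
  "rhoM a \<tau> = integral {0..\<tau>} (\<lambda>t. a t / sqrt ((a \<tau>)\<^sup>2 - (a t)\<^sup>2))"

definition tzero :: "(real \<Rightarrow> real) \<Rightarrow> real \<Rightarrow> real \<Rightarrow> real" where
  "tzero a \<tau> \<rho> = (THE t0. -\<tau> < t0 \<and> t0 < \<tau> \<and>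
      \<rho> = integral {t0..\<tau>} (\<lambda>t. a t / sqrt ((a \<tau>)\<^sup>2 - (a t)\<^sup>2)))"

definition fpos :: "(real \<Rightarrow> real) \<Rightarrow> real \<Rightarrow> real \<Rightarrow> real" where
  "fpos a \<tau> t0 = integral {t0..\<tau>} (\<lambda>t. deriv (deriv a) t / (deriv a t)\<^sup>2 *
      (sqrt ((a \<tau>)\<^sup>2 - (a t0)\<^sup>2) / sqrt ((a \<tau>)\<^sup>2 - (a t)\<^sup>2) - 1))"

definition fF :: "(real \<Rightarrow> real) \<Rightarrow> real \<Rightarrow> real \<Rightarrow> real" where
  "fF a \<tau> t0 = (if 0 \<le> t0 then fpos a \<tau> t0 else 2 * fpos a \<tau> 0 - fpos a \<tau> (- t0))"

definition g_tautau :: "(real \<Rightarrow> real) \<Rightarrow> real \<Rightarrow> real \<Rightarrow> real" where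
  "g_tautau a \<tau> \<rho> = - (1 - deriv a \<tau> * fF a \<tau> (tzero a \<tau> \<rho>))\<^sup>2"

definition rho_max :: "(real \<Rightarrow> real) \<Rightarrow> real \<Rightarrow> real" where
  "rho_max a \<tau> =
     (let Z = {\<rho>. 0 < \<rho> \<and> \<rho> < 2 * rhoM a \<tau> \<and> g_tautau a \<tau> \<rho> = 0}
      in if Z \<noteq> {} then Inf Z else 2 * rhoM a \<tau>)"

definition D_polar :: "(real \<Rightarrow> real) \<Rightarrow> real \<Rightarrow> real \<Rightarrow> (real \<times> real \<times> real \<times> real) set" where
  "D_polar a th0 ph0 = {(\<tau>, \<rho>, \<theta>, \<phi>). 0 < \<tau> \<and> 0 < \<rho> \<and> \<rho> < rho_max a \<tau> \<and>
      \<theta> \<in> {th0<..<th0 + pi} \<and> \<phi> \<in> {ph0<..<ph0 + 2 * pi}}"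

text \<open>g_thetatheta, extended at rho = rho_M by the value 0 (the limit in the theorem)\<close>
definition g_thth :: "int \<Rightarrow> (real \<Rightarrow> real) \<Rightarrow> real \<Rightarrow> real \<Rightarrow> real" where
  "g_thth k a \<tau> \<rho> = (if \<rho> = rhoM a \<tau> then 0 else
      (let t0 = tzero a \<tau> \<rho> in (a t0)\<^sup>2 * (S k (chi a \<bar>t0\<bar> \<tau>))\<^sup>2))"

definition g_phph :: "int \<Rightarrow> (real \<Rightarrow> real) \<Rightarrow> real \<Rightarrow> real \<Rightarrow> real \<Rightarrow> real" where
  "g_phph k a \<tau> \<rho> \<theta> = g_thth k a \<tau> \<rho> * (sin \<theta>)\<^sup>2"

end

theory Submission
  imports Defs
begin

locale rsf =
  fixes a :: "real \<Rightarrow> real"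
  assumes reg: "regular_scale_factor a"
    and even: "\<And>t. a (- t) = a t"
begin

abbreviation "a' \<equiv> deriv a"

lemma a0: "a 0 = 0" using reg by (simp add: regular_scale_factor_def)

lemma smono: "0 \<le> x \<Longrightarrow> x < y \<Longrightarrow> a x < a y"
  using reg unfolding regular_scale_factor_def strict_mono_on_def by auto

lemma a_abs: "a \<bar>t\<bar> = a t"
  by (cases "t \<ge> 0") (auto simp: even)

lemma apos: "t \<noteq> 0 \<Longrightarrow> a t > 0"
  using smono[of 0 "\<bar>t\<bar>"] a0 a_abs by auto

lemma anonneg: "a t \<ge> 0"
  using apos[of t] a0 by (cases "t = 0") auto

lemma alt: "\<bar>s\<bar> < \<bar>t\<bar> \<Longrightarrow> a s < a t"
  using smono[of "\<bar>s\<bar>" "\<bar>t\<bar>"] a_abs by auto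

lemma ale: "a s \<le> a t" if "\<bar>s\<bar> \<le> \<bar>t\<bar>"
proof (cases "\<bar>s\<bar> = \<bar>t\<bar>")
  case True then show ?thesis by (metis a_abs order.refl)
next
  case False then show ?thesis using alt[of s t] that by linarith
qed

lemma a_sq_le: "\<bar>x\<bar> \<le> \<bar>y\<bar> \<Longrightarrow> (a x)\<^sup>2 \<le> (a y)\<^sup>2"
  using ale[of x y] anonneg[of x] by (simp add: power_mono)

lemma cont_a: "continuous_on UNIV a"
proof -
  have "continuous_on {0..} a" using reg by (simp add: regular_scale_factor_def)
  then have "continuous_on UNIV (\<lambda>t. a \<bar>t\<bar>)"
    by (rule continuous_on_compose2[OF _ continuous_on_rabs[OF continuous_on_id]]) auto
  then show ?thesis by (simp add: a_abs)
qed

lemma isCont_a: "isCont a x"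
  using cont_a by (simp add: continuous_on_eq_continuous_at)

lemma cont_a_intros[continuous_intros]: "continuous_on X f \<Longrightarrow> continuous_on X (\<lambda>x. a (f x))"
  by (rule continuous_on_compose2[OF cont_a]) auto

lemma tendsto_a[tendsto_intros]: "(f \<longlongrightarrow> l) F \<Longrightarrow> ((\<lambda>x. a (f x)) \<longlongrightarrow> a l) F"
  using isCont_a isCont_tendsto_compose by blast

lemma deriv_a: "t > 0 \<Longrightarrow> (a has_real_derivative a' t) (at t)"
  using reg by (simp add: regular_scale_factor_def)

lemma isCont_a': "t > 0 \<Longrightarrow> isCont a' t"
  using reg DERIV_isCont unfolding regular_scale_factor_def by blast

lemma a'pos: "t > 0 \<Longrightarrow> a' t > 0"
proof (rule ccontr)
  assume t: "t > 0" and "\<not> a' t > 0"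
  moreover have "a' t \<noteq> 0" using reg t by (simp add: regular_scale_factor_def)
  ultimately have "a' t < 0" by auto
  from DERIV_neg_dec_right[OF deriv_a[OF t] this] obtain d where
    "d > 0" "\<And>h. h > 0 \<Longrightarrow> h < d \<Longrightarrow> a t > a (t + h)" by auto
  from this(2)[of "d/2"] \<open>d>0\<close> smono[of t "t + d/2"] t show False by auto
qed

definition Dq :: "real \<Rightarrow> real \<Rightarrow> real" where
  "Dq x y = (if x = y then a' x else (a x - a y) / (x - y))"

definition Q :: "real \<Rightarrow> real \<Rightarrow> real" where
  "Q x y = Dq x y * (a x + a y)"

definition RR :: "(real \<times> real) set" where
  "RR = {(x, y). 0 < x \<and> - x < y \<and> y \<le> x}"

lemma Dq_pos: "0 < x \<Longrightarrow> - x < y \<Longrightarrow> y \<le> x \<Longrightarrow> Dq x y > 0"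
proof -
  assume h: "0 < x" "- x < y" "y \<le> x"
  show ?thesis
  proof (cases "y = x")
    case True then show ?thesis using a'pos h by (simp add: Dq_def)
  next
    case False
    then have "a y < a x" using alt[of y x] h by auto
    then show ?thesis using False h by (simp add: Dq_def)
  qed
qed

lemma Q_pos: "0 < x \<Longrightarrow> - x < y \<Longrightarrow> y \<le> x \<Longrightarrow> Q x y > 0"
  using Dq_pos[of x y] apos[of x] anonneg[of y] unfolding Q_def
  by (intro mult_pos_pos) auto

lemma Q_id: "y < x \<Longrightarrow> (a x)\<^sup>2 - (a y)\<^sup>2 = (x - y) * Q x y"
  by (simp add: Q_def Dq_def power2_eq_square field_simps)

lemma Dq_cont_diag:
  assumes x0: "x0 > 0"
  shows "isCont (\<lambda>p. Dq (fst p) (snd p)) (x0, x0)"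
  unfolding continuous_at_eps_delta
proof (intro allI impI)
  fix e :: real assume e: "e > 0"
  from isCont_a'[OF x0] e obtain d where d: "d > 0"
    "\<And>x'. dist x' x0 < d \<Longrightarrow> dist (a' x') (a' x0) < e"
    unfolding continuous_at_eps_delta by blast
  define d' where "d' = min d x0"
  have d': "d' > 0" using d x0 by (simp add: d'_def)
  show "\<exists>d>0. \<forall>x'. dist x' (x0, x0) < d \<longrightarrow>
      dist (Dq (fst x') (snd x')) (Dq (fst (x0, x0)) (snd (x0, x0))) < e"
  proof (intro exI[of _ d'] conjI allI impI d')
    fix p :: "real \<times> real" assume p: "dist p (x0, x0) < d'"
    obtain x y where pxy: "p = (x, y)" by (cases p)
    have hx: "dist x x0 < d'" using dist_fst_le[of p "(x0,x0)"] p pxy by auto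
    have hy: "dist y x0 < d'" using dist_snd_le[of p "(x0,x0)"] p pxy by auto
    have xpos: "x > 0" and ypos: "y > 0" using hx hy by (auto simp: d'_def dist_real_def)
    have key: "\<exists>z. dist z x0 < d \<and> Dq x y = a' z"
    proof (cases x y rule: linorder_cases)
      case less
      from MVT2[OF less, of a a'] deriv_a xpos
      obtain z where z: "x < z" "z < y" "a y - a x = (y - x) * a' z" by force
      have "dist z x0 < d" using z hx hy by (auto simp: d'_def dist_real_def)
      moreover have "Dq x y = a' z" using z less by (simp add: Dq_def field_simps)
      ultimately show ?thesis by blast
    next
      case equal then show ?thesis using hx by (auto simp: Dq_def d'_def)
    next
      case greater
      from MVT2[OF greater, of a a'] deriv_a ypos
      obtain z where z: "y < z" "z < x" "a x - a y = (x - y) * a' z" by force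
      have "dist z x0 < d" using z hx hy by (auto simp: d'_def dist_real_def)
      moreover have "Dq x y = a' z" using z greater by (simp add: Dq_def field_simps)
      ultimately show ?thesis by blast
    qed
    then obtain z where "dist z x0 < d" "Dq x y = a' z" by blast
    then show "dist (Dq (fst p) (snd p)) (Dq (fst (x0, x0)) (snd (x0, x0))) < e"
      using d(2)[of z] pxy by (simp add: Dq_def)
  qed
qed

lemma Dq_cont_off:
  assumes "x0 \<noteq> y0"
  shows "isCont (\<lambda>p. Dq (fst p) (snd p)) (x0, y0)"
proof -
  have ic: "isCont (\<lambda>p. (a (fst p) - a (snd p)) / (fst p - snd p)) (x0, y0)"
    using assms
    by (intro continuous_intros isCont_o2[OF _ isCont_a]) auto
  have op: "open {p :: real \<times> real. fst p \<noteq> snd p}"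
    by (intro open_Collect_neq continuous_intros)
  have "\<forall>\<^sub>F p in nhds (x0, y0). fst p \<noteq> snd p"
    using eventually_nhds_in_open[OF op, of "(x0,y0)"] assms by simp
  then have "\<forall>\<^sub>F p in nhds (x0, y0). Dq (fst p) (snd p) = (a (fst p) - a (snd p)) / (fst p - snd p)"
    by eventually_elim (simp add: Dq_def)
  then show ?thesis using ic by (subst isCont_cong) auto
qed

lemma Dq_cont: "(x, y) \<in> RR \<Longrightarrow> isCont (\<lambda>p. Dq (fst p) (snd p)) (x, y)"
  using Dq_cont_diag Dq_cont_off unfolding RR_def by (cases "x = y") auto

lemma Q_cont: "continuous_on RR (\<lambda>p. Q (fst p) (snd p))"
proof -
  have "continuous_on RR (\<lambda>p. Dq (fst p) (snd p))"
    using Dq_cont by (intro continuous_at_imp_continuous_on) auto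
  then show ?thesis unfolding Q_def
    by (intro continuous_intros) auto
qed

lemma a_meas[measurable]: "a \<in> borel_measurable borel"
  by (rule borel_measurable_continuous_onI[OF cont_a])

definition gg :: "real \<Rightarrow> real \<Rightarrow> real \<Rightarrow> real" where
  "gg \<tau> t0 v = \<tau> - (\<tau> - t0) * (1 - v)\<^sup>2"

lemma gg_range: "t0 \<le> \<tau> \<Longrightarrow> v \<in> {0..1} \<Longrightarrow> gg \<tau> t0 v \<in> {t0..\<tau>}"
proof -
  assume h: "t0 \<le> \<tau>" "v \<in> {0..1}"
  have "(1 - v)\<^sup>2 \<le> 1" using h by (auto simp: power_le_one)
  then have "(\<tau> - t0) * (1 - v)\<^sup>2 \<le> (\<tau> - t0)" using h by (simp add: mult_left_le)
  then show ?thesis using h by (auto simp: gg_def)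
qed

definition HH :: "(real \<Rightarrow> real) \<Rightarrow> real \<Rightarrow> real \<Rightarrow> real \<Rightarrow> real" where
  "HH P \<tau> t0 v = 2 * sqrt (\<tau> - t0) * P (gg \<tau> t0 v) / sqrt (Q \<tau> (gg \<tau> t0 v))"

lemma subst:
  fixes P :: "real \<Rightarrow> real"
  assumes tau: "\<tau> > 0" "- \<tau> < t0" "t0 < \<tau>"
    and Pm: "P \<in> borel_measurable borel"
    and Pnn: "\<And>t. t \<in> {t0..\<tau>} \<Longrightarrow> P t \<ge> 0"
    and Pc: "continuous_on {t0..\<tau>} P"
  shows "((\<lambda>t. P t / sqrt ((a \<tau>)\<^sup>2 - (a t)\<^sup>2)) has_integral
            integral {0..1} (HH P \<tau> t0)) {t0..\<tau>}"
proof -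
  define f where "f = (\<lambda>t. P t / sqrt ((a \<tau>)\<^sup>2 - (a t)\<^sup>2))"
  define h where "h = HH P \<tau> t0"
  define I where "I = integral {0..1} h"
  have ggR: "(\<tau>, gg \<tau> t0 v) \<in> RR" if "v \<in> {0..1}" for v
    using gg_range[of t0 \<tau> v] that tau by (auto simp: RR_def)
  have Qp: "Q \<tau> (gg \<tau> t0 v) > 0" if "v \<in> {0..1}" for v
    using ggR[OF that] Q_pos by (auto simp: RR_def)
  have gc: "continuous_on {0..1} (gg \<tau> t0)" unfolding gg_def by (intro continuous_intros)
  have c1: "continuous_on {0..1} (\<lambda>v. P (gg \<tau> t0 v))"
    by (rule continuous_on_compose2[OF Pc gc]) (use gg_range tau in auto)
  have c2: "continuous_on {0..1} (\<lambda>v. Q \<tau> (gg \<tau> t0 v))"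
  proof -
    have "continuous_on {0..1} (\<lambda>v. (\<tau>, gg \<tau> t0 v))" using gc by (intro continuous_intros)
    moreover have "(\<lambda>v. (\<tau>, gg \<tau> t0 v)) ` {0..1} \<subseteq> RR" using ggR by auto
    ultimately show ?thesis using continuous_on_compose2[OF Q_cont, of "{0..1}" "\<lambda>v. (\<tau>, gg \<tau> t0 v)"] by simp
  qed
  have hc: "continuous_on {0..1} h"
    unfolding h_def HH_def using Qp
    by (intro continuous_intros c1 c2) (auto, fastforce)
  have hnn: "h v \<ge> 0" if "v \<in> {0..1}" for v
    unfolding h_def HH_def using Pnn[OF gg_range[OF _ that]] tau Qp[OF that]
    by (intro divide_nonneg_pos mult_nonneg_nonneg) auto
  have hI: "(h has_integral I) {0..1}"
    unfolding I_def using hc integrable_continuous_real by blast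
  have I0: "I \<ge> 0" using hI hnn by (meson has_integral_nonneg)
  have nn1: "(\<integral>\<^sup>+x. ennreal (h x) * indicator {0..1} x \<partial>lborel) = ennreal I"
    by (rule nn_integral_has_integral_lebesgue'[OF hnn hI])
  have fm: "f \<in> borel_measurable borel" unfolding f_def using Pm by measurable
  have sub: "(\<integral>\<^sup>+x. f x * indicator {gg \<tau> t0 0..gg \<tau> t0 1} x \<partial>lborel) =
      (\<integral>\<^sup>+x. f (gg \<tau> t0 x) * (2 * (\<tau> - t0) * (1 - x)) * indicator {0..1} x \<partial>lborel)"
  proof (rule nn_integral_substitution)
    show "set_borel_measurable borel {gg \<tau> t0 0..gg \<tau> t0 1} f"
      unfolding set_borel_measurable_def using fm by measurable
    show "(gg \<tau> t0 has_real_derivative 2 * (\<tau> - t0) * (1 - x)) (at x)" for x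
      unfolding gg_def by (auto intro!: derivative_eq_intros simp: power2_eq_square algebra_simps)
  qed (use tau in \<open>auto intro!: continuous_intros\<close>)
  have "(\<integral>\<^sup>+x. f (gg \<tau> t0 x) * (2 * (\<tau> - t0) * (1 - x)) * indicator {0..1} x \<partial>lborel) =
        (\<integral>\<^sup>+x. ennreal (h x) * indicator {0..1} x \<partial>lborel)"
  proof (rule nn_integral_cong_AE)
    show "AE x in lborel. ennreal (f (gg \<tau> t0 x) * (2 * (\<tau> - t0) * (1 - x)) * indicator {0..1} x) =
        ennreal (h x) * indicator {0..1} x"
      using AE_lborel_singleton[of 1]
    proof eventually_elim
      case (elim x)
      show ?case
      proof (cases "x \<in> {0..1}")
        case False then show ?thesis by simp
      next
        case True
        with elim have x1: "x < 1" by auto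
        have Qx: "Q \<tau> (gg \<tau> t0 x) > 0" using Qp True by auto
        have lt: "gg \<tau> t0 x < \<tau>" using x1 tau by (auto simp: gg_def)
        have "(a \<tau>)\<^sup>2 - (a (gg \<tau> t0 x))\<^sup>2 = (\<tau> - t0) * (1 - x)\<^sup>2 * Q \<tau> (gg \<tau> t0 x)"
          using Q_id[OF lt] by (simp add: gg_def)
        then have sq: "sqrt ((a \<tau>)\<^sup>2 - (a (gg \<tau> t0 x))\<^sup>2) = sqrt (\<tau> - t0) * (1 - x) * sqrt (Q \<tau> (gg \<tau> t0 x))"
          using x1 tau by (simp add: real_sqrt_mult)
        have s2: "sqrt (\<tau> - t0) * sqrt (\<tau> - t0) = \<tau> - t0" using tau by simp
        have "f (gg \<tau> t0 x) * (2 * (\<tau> - t0) * (1 - x)) = h x"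
        proof -
          have alg: "p / (r * c * q) * (2 * (r * r) * c) = 2 * r * p / q"
            if "r > 0" "c > 0" "q > 0" for p r c q :: real
            using that by (simp add: field_simps)
          have "f (gg \<tau> t0 x) * (2 * (\<tau> - t0) * (1 - x)) =
            P (gg \<tau> t0 x) / (sqrt (\<tau> - t0) * (1 - x) * sqrt (Q \<tau> (gg \<tau> t0 x))) *
             (2 * (sqrt (\<tau> - t0) * sqrt (\<tau> - t0)) * (1 - x))"
            unfolding f_def sq s2 ..
          also have "\<dots> = h x" unfolding h_def HH_def
            by (rule alg) (use x1 Qx tau in auto)
          finally show ?thesis .
        qed
        then show ?thesis using True by simp
      qed
    qed
  qed
  then have nnf: "(\<integral>\<^sup>+x. ennreal (f x * indicator {t0..\<tau>} x) \<partial>lborel) = ennreal I"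
    using sub nn1 tau by (simp add: gg_def)
  have fnn: "0 \<le> f x * indicator {t0..\<tau>} x" for x
    using Pnn[of x] tau a_sq_le[of x \<tau>] by (auto simp: f_def indicator_def intro!: divide_nonneg_nonneg)
  have "((\<lambda>x. f x * indicator {t0..\<tau>} x) has_integral I) UNIV"
    by (rule nn_integral_has_integral[OF _ fnn nnf I0]) (use fm in measurable)
  then have "(f has_integral I) {t0..\<tau>}"
  proof -
    have "(\<lambda>x. f x * indicator {t0..\<tau>} x) = (\<lambda>x. if x \<in> {t0..\<tau>} then f x else 0)"
      by (auto simp: indicator_def)
    then show ?thesis using \<open>((\<lambda>x. f x * indicator {t0..\<tau>} x) has_integral I) UNIV\<close>
      by (simp only: has_integral_restrict_UNIV)
  qed
  then show ?thesis unfolding f_def I_def h_def .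
qed



definition WW :: "(real \<times> real) set" where
  "WW = {(\<tau>, t0). 0 < \<tau> \<and> - \<tau> < t0 \<and> t0 \<le> \<tau>}"

lemma ggRR: "(p, v) \<in> WW \<times> {0..1} \<Longrightarrow> (fst p, gg (fst p) (snd p) v) \<in> RR"
  using gg_range[of "snd p" "fst p" v] by (cases p) (auto simp: WW_def RR_def)

lemma gg_cont2: "continuous_on X (\<lambda>z. gg (f z) (g z) (h z))" if
  "continuous_on X f" "continuous_on X g" "continuous_on X h"
  unfolding gg_def by (intro continuous_intros that)

lemma QWW_cont: "continuous_on (WW \<times> {0..1})
   (\<lambda>z. Q (fst (fst z)) (gg (fst (fst z)) (snd (fst z)) (snd z)))"
proof -
  have "continuous_on (WW \<times> {0..1}) (\<lambda>z. (fst (fst z), gg (fst (fst z)) (snd (fst z)) (snd z)))"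
    by (intro continuous_intros gg_cont2)
  moreover have "(\<lambda>z. (fst (fst z), gg (fst (fst z)) (snd (fst z)) (snd z))) ` (WW \<times> {0..1}) \<subseteq> RR"
    using ggRR by force
  ultimately show ?thesis
    using continuous_on_compose2[OF Q_cont, of "WW \<times> {0..1}" "\<lambda>z. (fst (fst z), gg (fst (fst z)) (snd (fst z)) (snd z))"]
    by simp
qed

lemma QWW_pos: "z \<in> WW \<times> {0..1} \<Longrightarrow> Q (fst (fst z)) (gg (fst (fst z)) (snd (fst z)) (snd z)) > 0"
  using ggRR[of "fst z" "snd z"] Q_pos by (cases z) (auto simp: RR_def)

definition G :: "real \<Rightarrow> real \<Rightarrow> real" where
  "G \<tau> t0 = integral {0..1} (HH a \<tau> t0)"

lemma G_cont: "continuous_on WW (\<lambda>p. G (fst p) (snd p))"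
proof -
  have c: "continuous_on (WW \<times> {0..1}) (\<lambda>z. HH a (fst (fst z)) (snd (fst z)) (snd z))"
    unfolding HH_def
  proof (intro continuous_intros gg_cont2 QWW_cont ballI)
    fix z :: "(real \<times> real) \<times> real" assume z: "z \<in> WW \<times> {0..1}"
    show "sqrt (Q (fst (fst z)) (gg (fst (fst z)) (snd (fst z)) (snd z))) \<noteq> 0"
      using QWW_pos[OF z] by simp
  qed
  have c': "continuous_on (WW \<times> cbox 0 1) (\<lambda>(x, t). HH a (fst x) (snd x) t)"
    using c by (simp add: case_prod_beta cbox_interval)
  have "continuous_on WW (\<lambda>p. integral (cbox 0 1) (HH a (fst p) (snd p)))"
    by (rule integral_continuous_on_param[OF c'])
  then show ?thesis by (simp add: G_def)
qed

abbreviation fint :: "real \<Rightarrow> real \<Rightarrow> real" where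
  "fint \<tau> \<equiv> (\<lambda>t. a t / sqrt ((a \<tau>)\<^sup>2 - (a t)\<^sup>2))"

lemma fint_hasint: "\<tau> > 0 \<Longrightarrow> - \<tau> < t0 \<Longrightarrow> t0 \<le> \<tau> \<Longrightarrow> (fint \<tau> has_integral G \<tau> t0) {t0..\<tau>}"
proof (cases "t0 = \<tau>")
  case True
  have "HH a \<tau> \<tau> = (\<lambda>v. 0)" by (simp add: HH_def fun_eq_iff)
  then have "G \<tau> t0 = 0" using True by (simp add: G_def)
  then show ?thesis using True has_integral_refl(2)[of "fint \<tau>" \<tau>] by simp
next
  case False
  assume "\<tau> > 0" "- \<tau> < t0" "t0 \<le> \<tau>"
  then show ?thesis unfolding G_def using False
    by (intro subst) (auto intro: continuous_intros simp: anonneg)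
qed

lemma Fr_eq: "\<tau> > 0 \<Longrightarrow> - \<tau> < t0 \<Longrightarrow> t0 \<le> \<tau> \<Longrightarrow> integral {t0..\<tau>} (fint \<tau>) = G \<tau> t0"
  using fint_hasint integral_unique by blast

lemma fint_nonneg: "\<bar>t\<bar> \<le> \<tau> \<Longrightarrow> fint \<tau> t \<ge> 0"
  using a_sq_le[of t \<tau>] anonneg[of t] by (intro divide_nonneg_nonneg) auto

lemma fint_pos: "\<bar>t\<bar> < \<tau> \<Longrightarrow> t \<noteq> 0 \<Longrightarrow> fint \<tau> t > 0"
proof -
  assume h: "\<bar>t\<bar> < \<tau>" "t \<noteq> 0"
  have "a t < a \<tau>" using alt[of t \<tau>] h by auto
  then have "(a t)\<^sup>2 < (a \<tau>)\<^sup>2" using anonneg[of t] by (simp add: power_strict_mono)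
  then show ?thesis using apos[OF h(2)] by (intro divide_pos_pos) auto
qed

lemma fint_cont: "\<bar>t1\<bar> < \<tau> \<Longrightarrow> \<bar>t2\<bar> < \<tau> \<Longrightarrow> continuous_on {t1..t2} (fint \<tau>)"
proof -
  assume h: "\<bar>t1\<bar> < \<tau>" "\<bar>t2\<bar> < \<tau>"
  have "(a t)\<^sup>2 < (a \<tau>)\<^sup>2" if "t \<in> {t1..t2}" for t
  proof -
    have "\<bar>t\<bar> < \<tau>" using that h by auto
    then have "a t < a \<tau>" using alt[of t \<tau>] by auto
    then show ?thesis using anonneg[of t] by (simp add: power_strict_mono)
  qed
  then show ?thesis by (intro continuous_intros) fastforce
qed


lemma Fr_strict:
  assumes "\<tau> > 0" "- \<tau> < t1" "t1 < t2" "t2 \<le> \<tau>"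
  shows "integral {t1..\<tau>} (fint \<tau>) > integral {t2..\<tau>} (fint \<tau>)"
proof -
  have int1: "fint \<tau> integrable_on {t1..\<tau>}"
    using fint_hasint[of \<tau> t1] assms by (meson has_integral_integrable less_trans less_le_trans order.strict_implies_order)
  define m where "m = (t1 + t2) / 2"
  have m: "t1 < m" "m < t2" using assms by (auto simp: m_def)
  have i12: "fint \<tau> integrable_on {t1..t2}"
    by (rule integrable_on_subinterval[OF int1]) (use assms in auto)
  have i1m: "fint \<tau> integrable_on {t1..m}"
    by (rule integrable_on_subinterval[OF int1]) (use assms m in auto)
  have im2: "fint \<tau> integrable_on {m..t2}"
    by (rule integrable_on_subinterval[OF int1]) (use assms m in auto)
  have e1: "integral {t1..t2} (fint \<tau>) + integral {t2..\<tau>} (fint \<tau>) = integral {t1..\<tau>} (fint \<tau>)"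
    by (rule Henstock_Kurzweil_Integration.integral_combine[OF _ _ int1]) (use assms in auto)
  have e2: "integral {t1..m} (fint \<tau>) + integral {m..t2} (fint \<tau>) = integral {t1..t2} (fint \<tau>)"
    by (rule Henstock_Kurzweil_Integration.integral_combine[OF _ _ i12]) (use m in auto)
  have nn2: "integral {m..t2} (fint \<tau>) \<ge> 0"
  proof (rule integral_nonneg[OF im2])
    fix x assume "x \<in> {m..t2}"
    then show "0 \<le> fint \<tau> x" using assms m by (intro fint_nonneg) auto
  qed
  have nn1: "integral {t1..m} (fint \<tau>) \<ge> 0"
  proof (rule integral_nonneg[OF i1m])
    fix x assume "x \<in> {t1..m}"
    then show "0 \<le> fint \<tau> x" using assms m by (intro fint_nonneg) auto
  qed
  have c: "continuous_on {t1..m} (fint \<tau>)" using assms m by (intro fint_cont) auto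
  obtain x where x: "x \<in> {t1..m}" "x \<noteq> 0"
  proof (cases "m = 0")
    case True then show ?thesis using that[of t1] m by auto
  next
    case False then show ?thesis using that[of m] m by auto
  qed
  have pos: "integral {t1..m} (fint \<tau>) \<noteq> 0"
  proof
    assume z: "integral {t1..m} (fint \<tau>) = 0"
    have "(fint \<tau> has_integral 0) (cbox t1 m)"
      using z i1m has_integral_integral[of "fint \<tau>" "{t1..m}"] by simp
    moreover have "continuous_on (cbox t1 m) (fint \<tau>)" using c by simp
    moreover have "\<And>y. y \<in> box t1 m \<Longrightarrow> 0 \<le> fint \<tau> y"
      using assms m by (intro fint_nonneg) auto
    moreover have "box t1 m \<noteq> {}" using m by simp
    moreover have "x \<in> cbox t1 m" using x by simp
    ultimately have "fint \<tau> x = 0"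
      using has_integral_0_cbox_imp_0[of t1 m "fint \<tau>" x] by blast
    moreover have "fint \<tau> x > 0" using x m assms by (intro fint_pos) auto
    ultimately show False by linarith
  qed
  show ?thesis using e1 e2 nn1 nn2 pos by linarith
qed

abbreviation Fr :: "real \<Rightarrow> real \<Rightarrow> real" where
  "Fr \<tau> t0 \<equiv> integral {t0..\<tau>} (fint \<tau>)"

lemma Fr_cont_t: "\<tau> > 0 \<Longrightarrow> continuous_on {0..\<tau>} (\<lambda>t. Fr \<tau> t)"
proof -
  assume tau: "\<tau> > 0"
  have "continuous_on {0..\<tau>} (\<lambda>t. G (fst (\<tau>, t)) (snd (\<tau>, t)))"
    by (rule continuous_on_compose2[OF G_cont]) (use tau in \<open>auto intro!: continuous_intros simp: WW_def\<close>)
  then show ?thesis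
    by (rule continuous_on_eq) (use tau Fr_eq in auto)
qed

lemma Fr_neg:
  assumes "\<tau> > 0" "- \<tau> < t0" "t0 < 0"
  shows "Fr \<tau> t0 = 2 * Fr \<tau> 0 - Fr \<tau> (- t0)"
proof -
  have int1: "fint \<tau> integrable_on {t0..\<tau>}"
    using fint_hasint[of \<tau> t0] assms by (meson has_integral_integrable less_trans order.strict_implies_order)
  have int0: "fint \<tau> integrable_on {0..\<tau>}"
    by (rule integrable_on_subinterval[OF int1]) (use assms in auto)
  have e1: "integral {t0..0} (fint \<tau>) + integral {0..\<tau>} (fint \<tau>) = Fr \<tau> t0"
    by (rule Henstock_Kurzweil_Integration.integral_combine[OF _ _ int1]) (use assms in auto)
  have e2: "integral {0..-t0} (fint \<tau>) + integral {-t0..\<tau>} (fint \<tau>) = Fr \<tau> 0"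
    by (rule Henstock_Kurzweil_Integration.integral_combine[OF _ _ int0]) (use assms in auto)
  have "integral {t0..0} (fint \<tau>) = integral {- 0..- t0} (\<lambda>x. fint \<tau> (- x))"
    by (rule Henstock_Kurzweil_Integration.integral_reflect_real[symmetric])
  also have "\<dots> = integral {0..-t0} (fint \<tau>)" by (simp add: even)
  finally show ?thesis using e1 e2 by linarith
qed

lemma exists_t:
  assumes tau: "\<tau> > 0" and r: "0 < \<rho>" "\<rho> < 2 * Fr \<tau> 0"
  shows "\<exists>t. - \<tau> < t \<and> t < \<tau> \<and> Fr \<tau> t = \<rho>"
proof (cases "\<rho> \<le> Fr \<tau> 0")
  case True
  from IVT2'[of "\<lambda>t. Fr \<tau> t" \<tau> \<rho> 0, OF _ True _ Fr_cont_t[OF tau]] tau r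
  obtain t where t: "0 \<le> t" "t \<le> \<tau>" "Fr \<tau> t = \<rho>" by auto
  then have "t \<noteq> \<tau>" using r by auto
  then show ?thesis using t tau by (intro exI[of _ t]) auto
next
  case False
  define y where "y = 2 * Fr \<tau> 0 - \<rho>"
  have y: "0 \<le> y" "y \<le> Fr \<tau> 0" using False r by (auto simp: y_def)
  from IVT2'[of "\<lambda>t. Fr \<tau> t" \<tau> y 0, OF _ y(2) _ Fr_cont_t[OF tau]] tau y
  obtain s where s: "0 \<le> s" "s \<le> \<tau>" "Fr \<tau> s = y" by auto
  have "s \<noteq> \<tau>" using s r y_def by auto
  moreover have "s \<noteq> 0" using s False y_def by auto
  ultimately have "Fr \<tau> (- s) = \<rho>" using Fr_neg[of \<tau> "-s"] s tau y_def by auto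
  then show ?thesis using s \<open>s \<noteq> \<tau>\<close> \<open>s \<noteq> 0\<close> tau by (intro exI[of _ "-s"]) auto
qed

lemma Fr_inj:
  assumes "\<tau> > 0" "- \<tau> < t1" "t1 < \<tau>" "- \<tau> < t2" "t2 < \<tau>" "Fr \<tau> t1 = Fr \<tau> t2"
  shows "t1 = t2"
  using Fr_strict[of \<tau> t1 t2] Fr_strict[of \<tau> t2 t1] assms
  by (cases t1 t2 rule: linorder_cases) auto

lemma tzero_eq:
  assumes "\<tau> > 0" "- \<tau> < t" "t < \<tau>"
  shows "tzero a \<tau> (Fr \<tau> t) = t"
  unfolding tzero_def
  by (rule the1_equality) (use assms Fr_inj[of \<tau>] in blast)+

lemma tzero_props:
  assumes "\<tau> > 0" "0 < \<rho>" "\<rho> < 2 * Fr \<tau> 0"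
  shows "- \<tau> < tzero a \<tau> \<rho> \<and> tzero a \<tau> \<rho> < \<tau> \<and> Fr \<tau> (tzero a \<tau> \<rho>) = \<rho>"
  using exists_t[OF assms] tzero_eq[of \<tau>] assms by force

definition Edom :: "(real \<times> real) set" where
  "Edom = {(\<tau>, \<rho>). 0 < \<tau> \<and> 0 < \<rho> \<and> \<rho> < 2 * Fr \<tau> 0}"

lemma dist_tau: "dist (x, u) (y, u) = dist x (y::real)" for u :: real
  by (simp add: dist_Pair_Pair)

lemma Fr_mono_le:
  assumes "\<tau> > 0" "- \<tau> < t1" "t1 \<le> t2" "t2 \<le> \<tau>"
  shows "Fr \<tau> t1 \<ge> Fr \<tau> t2"
  using Fr_strict[of \<tau> t1 t2] assms by (cases "t1 = t2") auto

lemma T_cont: "continuous_on Edom (\<lambda>p. tzero a (fst p) (snd p))"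
  unfolding continuous_on_iff
proof (intro ballI allI impI)
  fix p e assume p: "p \<in> Edom" and e: "(e::real) > 0"
  obtain \<tau>1 \<rho>1 where pp: "p = (\<tau>1, \<rho>1)" by (cases p)
  have E1: "0 < \<tau>1" "0 < \<rho>1" "\<rho>1 < 2 * Fr \<tau>1 0" using p pp by (auto simp: Edom_def)
  define t1 where "t1 = tzero a \<tau>1 \<rho>1"
  have t1: "- \<tau>1 < t1" "t1 < \<tau>1" "Fr \<tau>1 t1 = \<rho>1" using tzero_props[OF E1] by (auto simp: t1_def)
  define \<epsilon> where "\<epsilon> = min e ((\<tau>1 - \<bar>t1\<bar>) / 2)"
  have tt: "\<bar>t1\<bar> < \<tau>1" using t1 by auto
  have \<epsilon>: "\<epsilon> > 0" "\<epsilon> \<le> e" "\<bar>t1\<bar> + \<epsilon> < \<tau>1" using e tt unfolding \<epsilon>_def by (auto simp: min_def field_simps)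
  define u where "u = t1 - \<epsilon>"
  define w where "w = t1 + \<epsilon>"
  have uw: "\<bar>u\<bar> < \<tau>1" "\<bar>w\<bar> < \<tau>1" using \<epsilon> by (auto simp: u_def w_def)
  define A where "A = Fr \<tau>1 u"
  define B where "B = Fr \<tau>1 w"
  have A: "A > \<rho>1" unfolding A_def using Fr_strict[of \<tau>1 u t1] t1 uw \<epsilon> E1 by (auto simp: u_def)
  have B: "B < \<rho>1" unfolding B_def using Fr_strict[of \<tau>1 t1 w] t1 uw \<epsilon> E1 by (auto simp: w_def)
  define \<delta> where "\<delta> = min (A - \<rho>1) (\<rho>1 - B) / 2"
  have \<delta>: "\<delta> > 0" "\<rho>1 + 2 * \<delta> \<le> A" "B \<le> \<rho>1 - 2 * \<delta>" using A B by (auto simp: \<delta>_def)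
  have uW: "(\<tau>1, u) \<in> WW" and wW: "(\<tau>1, w) \<in> WW" using uw E1 by (auto simp: WW_def)
  obtain d1 where d1: "d1 > 0" "\<And>x'. x' \<in> WW \<Longrightarrow> dist x' (\<tau>1, u) < d1 \<Longrightarrow>
      dist (G (fst x') (snd x')) (G \<tau>1 u) < \<delta>"
    using G_cont[unfolded continuous_on_iff] uW \<delta> by fastforce
  obtain d2 where d2: "d2 > 0" "\<And>x'. x' \<in> WW \<Longrightarrow> dist x' (\<tau>1, w) < d2 \<Longrightarrow>
      dist (G (fst x') (snd x')) (G \<tau>1 w) < \<delta>"
    using G_cont[unfolded continuous_on_iff] wW \<delta> by fastforce
  define d0 where "d0 = \<tau>1 - max \<bar>u\<bar> \<bar>w\<bar>"
  have d0: "d0 > 0" using uw by (auto simp: d0_def)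
  define dd where "dd = min (min d0 d1) (min d2 \<delta>)"
  have dd: "dd > 0" using d0 d1 d2 \<delta> by (auto simp: dd_def)
  have GA: "G \<tau>1 u = A" unfolding A_def using Fr_eq[of \<tau>1 u] uw E1 by auto
  have GB: "G \<tau>1 w = B" unfolding B_def using Fr_eq[of \<tau>1 w] uw E1 by auto
  show "\<exists>d>0. \<forall>x'\<in>Edom. dist x' p < d \<longrightarrow>
      dist (tzero a (fst x') (snd x')) (tzero a (fst p) (snd p)) < e"
  proof (intro exI[of _ dd] conjI dd ballI impI)
    fix q assume q: "q \<in> Edom" "dist q p < dd"
    obtain \<tau> \<rho> where qq: "q = (\<tau>, \<rho>)" by (cases q)
    have E: "0 < \<tau>" "0 < \<rho>" "\<rho> < 2 * Fr \<tau> 0" using q qq by (auto simp: Edom_def)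
    have dt: "dist \<tau> \<tau>1 < dd" using dist_fst_le[of q p] q qq pp by auto
    have dr: "dist \<rho> \<rho>1 < dd" using dist_snd_le[of q p] q qq pp by auto
    have tau_big: "\<bar>u\<bar> < \<tau>" "\<bar>w\<bar> < \<tau>" using dt by (auto simp: dd_def d0_def dist_real_def)
    have "dist (G \<tau> u) A < \<delta>"
    proof -
      have "- \<tau> < u \<and> u \<le> \<tau>" using tau_big by linarith
      then show ?thesis using d1(2)[of "(\<tau>, u)"] tau_big dt E GA by (auto simp: WW_def dist_tau dd_def)
    qed
    then have Fu: "Fr \<tau> u > \<rho>"
      using Fr_eq[of \<tau> u] tau_big E \<delta> dr by (auto simp: dist_real_def dd_def)
    have "dist (G \<tau> w) B < \<delta>"
    proof -
      have "- \<tau> < w \<and> w \<le> \<tau>" using tau_big by linarith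
      then show ?thesis using d2(2)[of "(\<tau>, w)"] tau_big dt E GB by (auto simp: WW_def dist_tau dd_def)
    qed
    then have Fw: "Fr \<tau> w < \<rho>"
      using Fr_eq[of \<tau> w] tau_big E \<delta> dr by (auto simp: dist_real_def dd_def)
    define t where "t = tzero a \<tau> \<rho>"
    have t: "- \<tau> < t" "t < \<tau>" "Fr \<tau> t = \<rho>" using tzero_props[OF E] by (auto simp: t_def)
    have "u < t"
    proof (rule ccontr)
      assume "\<not> u < t"
      then have "Fr \<tau> t \<ge> Fr \<tau> u" using Fr_mono_le[of \<tau> t u] t tau_big E by auto
      then show False using Fu t by auto
    qed
    moreover have "t < w"
    proof (rule ccontr)
      assume "\<not> t < w"
      then have "Fr \<tau> t \<le> Fr \<tau> w" using Fr_mono_le[of \<tau> w t] t tau_big E by auto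
      then show False using Fw t by auto
    qed
    ultimately have "\<bar>t - t1\<bar> < e" using \<epsilon> by (auto simp: u_def w_def)
    then show "dist (tzero a (fst q) (snd q)) (tzero a (fst p) (snd p)) < e"
      using qq pp by (simp add: t_def t1_def dist_real_def)
  qed
qed



abbreviation hint :: "real \<Rightarrow> real \<Rightarrow> real" where
  "hint \<tau> \<equiv> (\<lambda>t. (1 / a t) * (a \<tau> / sqrt ((a \<tau>)\<^sup>2 - (a t)\<^sup>2)))"

lemma hint_eq: "hint \<tau> = (\<lambda>t. (a \<tau> / a t) / sqrt ((a \<tau>)\<^sup>2 - (a t)\<^sup>2))"
  by (simp add: fun_eq_iff)

lemma chi_hasint:
  assumes "0 < s" "s < \<tau>"
  shows "(hint \<tau> has_integral integral {0..1} (HH (\<lambda>t. a \<tau> / a t) \<tau> s)) {s..\<tau>}"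
  unfolding hint_eq
proof (rule subst)
  show "continuous_on {s..\<tau>} (\<lambda>t. a \<tau> / a t)"
  proof (intro continuous_intros ballI)
    fix t assume "t \<in> {s..\<tau>}"
    then show "a t \<noteq> 0" using apos[of t] assms by auto
  qed
qed (use assms anonneg in \<open>simp_all\<close>)

lemma chi_eq: "0 < s \<Longrightarrow> s < \<tau> \<Longrightarrow> chi a s \<tau> = integral {0..1} (HH (\<lambda>t. a \<tau> / a t) \<tau> s)"
  unfolding chi_def using chi_hasint integral_unique by blast

lemma hint_nonneg: "\<bar>t\<bar> \<le> \<tau> \<Longrightarrow> hint \<tau> t \<ge> 0"
  using a_sq_le[of t \<tau>] anonneg[of t] anonneg[of \<tau>] by (intro mult_nonneg_nonneg divide_nonneg_nonneg) auto

lemma chi_nonneg: "0 < s \<Longrightarrow> s < \<tau> \<Longrightarrow> chi a s \<tau> \<ge> 0"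
  unfolding chi_def using chi_hasint[of s \<tau>] hint_nonneg[of _ \<tau>]
  by (intro integral_nonneg) (auto simp: has_integral_integrable)

definition Cdom :: "(real \<times> real) set" where
  "Cdom = {(s, \<tau>). 0 < s \<and> s < \<tau>}"

lemma chi_cont: "continuous_on Cdom (\<lambda>p. chi a (fst p) (snd p))"
proof -
  let ?m = "\<lambda>z::(real\<times>real)\<times>real. (snd (fst z), gg (snd (fst z)) (fst (fst z)) (snd z))"
  have rng: "gg (snd (fst z)) (fst (fst z)) (snd z) \<in> {fst (fst z)..snd (fst z)}" if "z \<in> Cdom \<times> {0..1}" for z
    using that gg_range[of "fst (fst z)" "snd (fst z)" "snd z"] by (auto simp: Cdom_def)
  have mR: "?m z \<in> RR" if "z \<in> Cdom \<times> {0..1}" for z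
    using rng[OF that] that by (auto simp: Cdom_def RR_def)
  have agpos: "a (gg (snd (fst z)) (fst (fst z)) (snd z)) > 0" if "z \<in> Cdom \<times> {0..1}" for z
    using rng[OF that] that by (intro apos) (auto simp: Cdom_def)
  have Qc: "continuous_on (Cdom \<times> {0..1}) (\<lambda>z. Q (fst (?m z)) (snd (?m z)))"
  proof -
    have "continuous_on (Cdom \<times> {0..1}) ?m" by (intro continuous_intros gg_cont2)
    moreover have "?m ` (Cdom \<times> {0..1}) \<subseteq> RR" using mR by force
    ultimately show ?thesis using continuous_on_compose2[OF Q_cont, of "Cdom \<times> {0..1}" ?m] by simp
  qed
  have Qp: "Q (fst (?m z)) (snd (?m z)) > 0" if "z \<in> Cdom \<times> {0..1}" for z
    using mR[OF that] Q_pos by (auto simp: RR_def)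
  have c: "continuous_on (Cdom \<times> {0..1}) (\<lambda>z. HH (\<lambda>t. a (snd (fst z)) / a t) (snd (fst z)) (fst (fst z)) (snd z))"
    unfolding HH_def
  proof (intro continuous_intros gg_cont2 ballI)
    show "continuous_on (Cdom \<times> {0..1}) (\<lambda>z. Q (snd (fst z)) (gg (snd (fst z)) (fst (fst z)) (snd z)))"
      using Qc by simp
  next
    fix z :: "(real \<times> real) \<times> real" assume z: "z \<in> Cdom \<times> {0..1}"
    show "sqrt (Q (snd (fst z)) (gg (snd (fst z)) (fst (fst z)) (snd z))) \<noteq> 0"
      using Qp[OF z] by simp
    show "a (gg (snd (fst z)) (fst (fst z)) (snd z)) \<noteq> 0" using agpos[OF z] by simp
  qed
  have c': "continuous_on (Cdom \<times> cbox 0 1) (\<lambda>(x, t). HH (\<lambda>t. a (snd x) / a t) (snd x) (fst x) t)"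
    using c by (simp add: case_prod_beta cbox_interval)
  have "continuous_on Cdom (\<lambda>p. integral (cbox 0 1) (HH (\<lambda>t. a (snd p) / a t) (snd p) (fst p)))"
    by (rule integral_continuous_on_param[OF c'])
  then show ?thesis
    by (rule continuous_on_eq) (auto simp: Cdom_def chi_eq)
qed

lemma chi_bound:
  assumes t0: "\<tau>0 > 0" and hor: "(\<lambda>t. 1 / a t) integrable_on {0..\<tau>0/2}"
  obtains M where "\<And>s \<tau>. 0 < s \<Longrightarrow> s < \<tau>0/2 \<Longrightarrow> 3*\<tau>0/4 < \<tau> \<Longrightarrow> \<tau> < 2*\<tau>0 \<Longrightarrow> chi a s \<tau> \<le> M"
proof -
  define c where "c = \<tau>0 / 2"
  have c: "0 < c" "c < 3*\<tau>0/4" using t0 by (auto simp: c_def)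
  define Pc where "Pc = integral {0..c} (\<lambda>t. 1 / a t)"
  have acpos: "a c > 0" using apos c by auto
  have acl: "a c < a (3*\<tau>0/4)" using alt[of c "3*\<tau>0/4"] c by auto
  define D where "D = (a (3*\<tau>0/4))\<^sup>2 - (a c)\<^sup>2"
  have Dpos: "D > 0" using acl acpos by (simp add: D_def power_strict_mono)
  define K1 where "K1 = a (2*\<tau>0) / sqrt D"
  have K1: "K1 \<ge> 0" using anonneg Dpos by (simp add: K1_def)
  have Gc: "continuous_on {3*\<tau>0/4..2*\<tau>0} (\<lambda>\<tau>. G (fst (\<tau>, c)) (snd (\<tau>, c)))"
    by (rule continuous_on_compose2[OF G_cont]) (use c in \<open>auto intro!: continuous_intros simp: WW_def\<close>)
  obtain Bf where Bf: "\<And>\<tau>. \<tau> \<in> {3*\<tau>0/4..2*\<tau>0} \<Longrightarrow> norm (G \<tau> c) \<le> Bf"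
    using continuous_on_compact_bound[OF compact_Icc Gc] by auto
  define M where "M = K1 * Pc + a (2*\<tau>0) / (a c)\<^sup>2 * Bf"
  show ?thesis
  proof (rule that[of M])
    fix s \<tau> assume s: "0 < s" "s < \<tau>0/2" and tau: "3*\<tau>0/4 < \<tau>" "\<tau> < 2*\<tau>0"
    have sc: "s < c" using s by (simp add: c_def)
    have ct: "c < \<tau>" using c tau by auto
    have ih: "hint \<tau> integrable_on {s..\<tau>}" using chi_hasint[of s \<tau>] s sc ct by (meson has_integral_integrable less_trans)
    have ih1: "hint \<tau> integrable_on {s..c}" by (rule integrable_on_subinterval[OF ih]) (use sc ct in auto)
    have ih2: "hint \<tau> integrable_on {c..\<tau>}" by (rule integrable_on_subinterval[OF ih]) (use sc ct in auto)
    have split: "integral {s..c} (hint \<tau>) + integral {c..\<tau>} (hint \<tau>) = chi a s \<tau>"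
      unfolding chi_def by (rule Henstock_Kurzweil_Integration.integral_combine[OF _ _ ih]) (use sc ct in auto)
    have ai: "(\<lambda>t. 1 / a t) integrable_on {s..c}"
      by (rule integrable_on_subinterval[OF hor]) (use s sc in \<open>auto simp: c_def\<close>)
    have part1: "integral {s..c} (hint \<tau>) \<le> K1 * Pc"
    proof -
      have "integral {s..c} (hint \<tau>) \<le> integral {s..c} (\<lambda>t. K1 * (1 / a t))"
      proof (rule integral_le[OF ih1])
        show "(\<lambda>t. K1 * (1 / a t)) integrable_on {s..c}"
          using integrable_on_cmult_left[OF ai, of K1] by simp
      next
        fix t assume t: "t \<in> {s..c}"
        have at: "a t \<le> a c" using ale[of t c] t s by auto
        have atp: "a t > 0" using apos[of t] t s by auto
        have aT: "a (3*\<tau>0/4) \<le> a \<tau>" using ale[of "3*\<tau>0/4" \<tau>] tau t0 by auto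
        have aT2: "a \<tau> \<le> a (2*\<tau>0)" using ale[of \<tau> "2*\<tau>0"] tau t0 by auto
        have "D \<le> (a \<tau>)\<^sup>2 - (a t)\<^sup>2"
          unfolding D_def using at aT atp acpos anonneg[of "3*\<tau>0/4"]
          by (smt (verit) power_mono)
        then have sq: "sqrt D \<le> sqrt ((a \<tau>)\<^sup>2 - (a t)\<^sup>2)" by simp
        have "a \<tau> / sqrt ((a \<tau>)\<^sup>2 - (a t)\<^sup>2) \<le> K1"
          unfolding K1_def using sq Dpos aT2 anonneg[of \<tau>]
          by (intro frac_le) auto
        then have "(1 / a t) * (a \<tau> / sqrt ((a \<tau>)\<^sup>2 - (a t)\<^sup>2)) \<le> (1 / a t) * K1"
          using atp by (intro mult_left_mono) auto
        then show "hint \<tau> t \<le> K1 * (1 / a t)" by (simp only: mult.commute[of K1])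
      qed
      also have "\<dots> = K1 * integral {s..c} (\<lambda>t. 1 / a t)"
        by (rule Henstock_Kurzweil_Integration.integral_mult_right)
      also have "\<dots> \<le> K1 * Pc"
      proof (rule mult_left_mono[OF _ K1])
        have i0: "(\<lambda>t. 1 / a t) integrable_on {0..c}" using hor by (simp add: c_def)
        have "integral {0..s} (\<lambda>t. 1 / a t) + integral {s..c} (\<lambda>t. 1 / a t) = Pc"
          unfolding Pc_def by (rule Henstock_Kurzweil_Integration.integral_combine[OF _ _ i0]) (use s sc in auto)
        moreover have "integral {0..s} (\<lambda>t. 1 / a t) \<ge> 0"
          by (rule integral_nonneg[OF integrable_on_subinterval[OF i0]]) (use sc anonneg in auto)
        ultimately show "integral {s..c} (\<lambda>t. 1 / a t) \<le> Pc" by linarith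
      qed
      finally show ?thesis .
    qed
    have part2: "integral {c..\<tau>} (hint \<tau>) \<le> a (2*\<tau>0) / (a c)\<^sup>2 * Bf"
    proof -
      have fi: "fint \<tau> integrable_on {c..\<tau>}" using fint_hasint[of \<tau> c] c ct tau
        by (meson has_integral_integrable less_trans order.strict_implies_order neg_less_0_iff_less)
      have "integral {c..\<tau>} (hint \<tau>) \<le> integral {c..\<tau>} (\<lambda>t. a \<tau> / (a c)\<^sup>2 * fint \<tau> t)"
      proof (rule integral_le[OF ih2])
        show "(\<lambda>t. a \<tau> / (a c)\<^sup>2 * fint \<tau> t) integrable_on {c..\<tau>}"
          using integrable_on_cmult_left[OF fi, of "a \<tau> / (a c)\<^sup>2"] by simp
      next
        fix t assume t: "t \<in> {c..\<tau>}"
        have at: "a c \<le> a t" using ale[of c t] t c by auto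
        have X: "a \<tau> / sqrt ((a \<tau>)\<^sup>2 - (a t)\<^sup>2) \<ge> 0"
          using a_sq_le[of t \<tau>] t c anonneg[of \<tau>] by (intro divide_nonneg_nonneg) auto
        have "1 / a t \<le> a t / (a c)\<^sup>2"
          using at acpos by (simp add: field_simps power2_eq_square mult_mono)
        then have "hint \<tau> t \<le> a t / (a c)\<^sup>2 * (a \<tau> / sqrt ((a \<tau>)\<^sup>2 - (a t)\<^sup>2))"
          using X by (rule mult_right_mono)
        also have "\<dots> = a \<tau> / (a c)\<^sup>2 * fint \<tau> t" by simp
        finally show "hint \<tau> t \<le> a \<tau> / (a c)\<^sup>2 * fint \<tau> t" .
      qed
      also have "\<dots> = a \<tau> / (a c)\<^sup>2 * Fr \<tau> c"
        by (rule Henstock_Kurzweil_Integration.integral_mult_right)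
      also have "\<dots> = a \<tau> / (a c)\<^sup>2 * G \<tau> c"
        using Fr_eq[of \<tau> c] c ct tau by simp
      also have "\<dots> \<le> a (2*\<tau>0) / (a c)\<^sup>2 * Bf"
      proof (rule mult_mono)
        show "a \<tau> / (a c)\<^sup>2 \<le> a (2*\<tau>0) / (a c)\<^sup>2"
          using ale[of \<tau> "2*\<tau>0"] tau t0 by (intro divide_right_mono) auto
        show "G \<tau> c \<le> Bf" using Bf[of \<tau>] tau by auto
        show "0 \<le> a (2*\<tau>0) / (a c)\<^sup>2" using anonneg by simp
        show "0 \<le> G \<tau> c"
        proof -
          have "0 \<le> Fr \<tau> c"
            by (rule integral_nonneg[OF fi]) (use c ct in \<open>auto intro!: fint_nonneg\<close>)
          then show ?thesis using Fr_eq[of \<tau> c] c ct tau by simp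
        qed
      qed
      finally show ?thesis .
    qed
    show "chi a s \<tau> \<le> M" using split part1 part2 by (simp add: M_def)
  qed
qed

lemma S_cont: "isCont (S k) x"
proof -
  have "S k = (if k = 1 then sin else if k = 0 then (\<lambda>x. x) else sinh)"
    by (auto simp: fun_eq_iff S_def)
  then show ?thesis by (auto intro!: continuous_intros)
qed

lemma S_bound: "0 \<le> x \<Longrightarrow> x \<le> M \<Longrightarrow> (S k x)\<^sup>2 \<le> 1 + M\<^sup>2 + (sinh M)\<^sup>2"
proof -
  assume x: "0 \<le> x" "x \<le> M"
  have s1: "(sin x)\<^sup>2 \<le> 1" using abs_sin_le_one[of x] by (simp add: abs_square_le_1)
  have s2: "x\<^sup>2 \<le> M\<^sup>2" using x by (simp add: power_mono)
  have s3: "(sinh x)\<^sup>2 \<le> (sinh M)\<^sup>2" using x by (intro power_mono) auto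
  have z: "0 \<le> M\<^sup>2" "0 \<le> (sinh M)\<^sup>2" by auto
  show ?thesis
  proof (cases "k = 1")
    case True
    then have "S k x = sin x" by (simp add: S_def)
    then have "(S k x)\<^sup>2 = (sin x)\<^sup>2" by simp
    then show ?thesis using s1 z by linarith
  next
    case False
    show ?thesis
    proof (cases "k = 0")
      case True
      then have "S k x = x" by (simp add: S_def)
      then have "(S k x)\<^sup>2 = (x)\<^sup>2" by simp
    then show ?thesis using s2 z by linarith
    next
      case F2: False
      then have "S k x = sinh x" using False by (simp add: S_def)
      then have "(S k x)\<^sup>2 = (sinh x)\<^sup>2" by simp
    then show ?thesis using s3 z by linarith
    qed
  qed
qed

definition E :: "int \<Rightarrow> real \<Rightarrow> real \<Rightarrow> real" where
  "E k \<tau> t0 = (a t0)\<^sup>2 * (S k (chi a \<bar>t0\<bar> \<tau>))\<^sup>2"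

lemma E_near:
  assumes t0: "\<tau>0 > 0" and hor: "(\<lambda>t. 1 / a t) integrable_on {0..\<tau>0/2}"
  obtains K where "\<And>\<tau> t. \<bar>t\<bar> < \<tau>0/2 \<Longrightarrow> 3*\<tau>0/4 < \<tau> \<Longrightarrow> \<tau> < 2*\<tau>0 \<Longrightarrow>
      0 \<le> E k \<tau> t \<and> E k \<tau> t \<le> K * (a t)\<^sup>2"
proof -
  obtain M where M: "\<And>s \<tau>. 0 < s \<Longrightarrow> s < \<tau>0/2 \<Longrightarrow> 3*\<tau>0/4 < \<tau> \<Longrightarrow> \<tau> < 2*\<tau>0 \<Longrightarrow> chi a s \<tau> \<le> M"
    using chi_bound[OF t0 hor] by blast
  define K where "K = 1 + M\<^sup>2 + (sinh M)\<^sup>2"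
  show ?thesis
  proof (rule that[of K])
    fix \<tau> t assume h: "\<bar>t\<bar> < \<tau>0/2" "3*\<tau>0/4 < \<tau>" "\<tau> < 2*\<tau>0"
    show "0 \<le> E k \<tau> t \<and> E k \<tau> t \<le> K * (a t)\<^sup>2"
    proof (cases "t = 0")
      case True then show ?thesis by (simp add: E_def a0)
    next
      case False
      have lt: "\<bar>t\<bar> < \<tau>" using h by auto
      have c0: "0 \<le> chi a \<bar>t\<bar> \<tau>" using chi_nonneg[of "\<bar>t\<bar>" \<tau>] False lt by auto
      have cM: "chi a \<bar>t\<bar> \<tau> \<le> M" using M[of "\<bar>t\<bar>" \<tau>] False h by auto
      have "(S k (chi a \<bar>t\<bar> \<tau>))\<^sup>2 \<le> K" unfolding K_def by (rule S_bound[OF c0 cM])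
      then have "(a t)\<^sup>2 * (S k (chi a \<bar>t\<bar> \<tau>))\<^sup>2 \<le> (a t)\<^sup>2 * K" by (intro mult_left_mono) auto
      then show ?thesis by (simp add: E_def mult.commute)
    qed
  qed
qed

lemma E_tendsto0:
  assumes t0: "\<tau>0 > 0" and hor: "(\<lambda>t. 1 / a t) integrable_on {0..\<tau>0/2}"
  shows "((\<lambda>p. E k (fst p) (snd p)) \<longlongrightarrow> 0) (at (\<tau>0, 0) within X)"
proof -
  obtain K where K: "\<And>\<tau> t. \<bar>t\<bar> < \<tau>0/2 \<Longrightarrow> 3*\<tau>0/4 < \<tau> \<Longrightarrow> \<tau> < 2*\<tau>0 \<Longrightarrow>
      0 \<le> E k \<tau> t \<and> E k \<tau> t \<le> K * (a t)\<^sup>2"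
    using E_near[OF t0 hor] by blast
  define U where "U = {p :: real \<times> real. \<bar>snd p\<bar> < \<tau>0/2 \<and> 3*\<tau>0/4 < fst p \<and> fst p < 2*\<tau>0}"
  have "open U" unfolding U_def
    by (intro open_Collect_conj open_Collect_less continuous_intros)
  moreover have "(\<tau>0, 0) \<in> U" using t0 by (auto simp: U_def)
  ultimately have ev: "\<forall>\<^sub>F p in nhds (\<tau>0, 0). p \<in> U" by (rule eventually_nhds_in_open)
  have evw: "\<forall>\<^sub>F p in at (\<tau>0, 0) within X. p \<in> U"
    using ev unfolding eventually_at_filter by (rule eventually_mono) auto
  have lo: "\<forall>\<^sub>F p in at (\<tau>0, 0) within X. 0 \<le> E k (fst p) (snd p)"
    using evw by (rule eventually_mono) (use K in \<open>auto simp: U_def\<close>)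
  have hi: "\<forall>\<^sub>F p in at (\<tau>0, 0) within X. E k (fst p) (snd p) \<le> K * (a (snd p))\<^sup>2"
    using evw by (rule eventually_mono) (use K in \<open>auto simp: U_def\<close>)
  have lim: "((\<lambda>p. K * (a (snd p))\<^sup>2) \<longlongrightarrow> K * (a (snd (\<tau>0, 0::real)))\<^sup>2) (at (\<tau>0, 0) within X)"
    by (intro tendsto_intros tendsto_snd[OF tendsto_ident_at])
  show ?thesis
    by (rule tendsto_sandwich[OF lo hi tendsto_const]) (use lim in \<open>simp add: a0\<close>)
qed

definition Wd :: "(real \<times> real) set" where
  "Wd = {(\<tau>, t). 0 < \<tau> \<and> \<bar>t\<bar> < \<tau>}"

lemma open_Cdom: "open Cdom"
proof -
  have "Cdom = {p. 0 < fst p} \<inter> {p. fst p < snd p}" by (auto simp: Cdom_def)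
  moreover have "open ({p :: real \<times> real. 0 < fst p} \<inter> {p. fst p < snd p})"
    by (intro open_Int open_Collect_less continuous_intros)
  ultimately show ?thesis by simp
qed

lemma E_cont:
  assumes hor: "\<And>\<tau>. \<tau> > 0 \<Longrightarrow> (\<lambda>t. 1 / a t) integrable_on {0..\<tau>}"
  shows "continuous_on Wd (\<lambda>p. E k (fst p) (snd p))"
proof (rule continuous_on_eq_continuous_within[THEN iffD2], rule ballI)
  fix p assume p: "p \<in> Wd"
  obtain \<tau> t where pp: "p = (\<tau>, t)" by (cases p)
  have tau: "\<tau> > 0" "\<bar>t\<bar> < \<tau>" using p pp by (auto simp: Wd_def)
  show "continuous (at p within Wd) (\<lambda>p. E k (fst p) (snd p))"
  proof (cases "t = 0")
    case True
    have "((\<lambda>p. E k (fst p) (snd p)) \<longlongrightarrow> 0) (at (\<tau>, 0) within Wd)"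
      by (rule E_tendsto0) (use tau hor in auto)
    then show ?thesis unfolding continuous_within using True pp by (simp add: E_def a0)
  next
    case False
    have cc: "isCont (\<lambda>q. chi a (fst q) (snd q)) (\<bar>t\<bar>, \<tau>)"
      using chi_cont open_Cdom False tau
      by (simp add: continuous_on_eq_continuous_at Cdom_def)
    have m: "isCont (\<lambda>p. (\<bar>snd p\<bar>, fst p)) p" by (intro continuous_intros)
    have "isCont (\<lambda>x. (\<lambda>q. chi a (fst q) (snd q)) ((\<lambda>p. (\<bar>snd p\<bar>, fst p)) x)) p"
      by (rule isCont_o2[OF m]) (use cc pp in simp)
    then have c2: "isCont (\<lambda>p. chi a \<bar>snd p\<bar> (fst p)) p" by simp
    have "isCont (\<lambda>p. E k (fst p) (snd p)) p"
      unfolding E_def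
      by (intro continuous_intros isCont_o2[OF _ isCont_a] isCont_o2[OF c2 S_cont])
    then show ?thesis by (rule continuous_at_imp_continuous_within)
  qed
qed

lemma rho_max_le: "rho_max a \<tau> \<le> 2 * rhoM a \<tau>"
proof -
  let ?Z = "{\<rho>. 0 < \<rho> \<and> \<rho> < 2 * rhoM a \<tau> \<and> g_tautau a \<tau> \<rho> = 0}"
  show ?thesis
  proof (cases "?Z = {}")
    case True then show ?thesis by (simp add: rho_max_def)
  next
    case False
    then obtain z where z: "z \<in> ?Z" by blast
    have "Inf ?Z \<le> z" by (rule cInf_lower[OF z]) (auto intro: bdd_belowI[of _ 0])
    then show ?thesis using False z by (simp add: rho_max_def)
  qed
qed

lemma gthth_eq: "(\<tau>, \<rho>) \<in> Edom \<Longrightarrow> g_thth k a \<tau> \<rho> = E k \<tau> (tzero a \<tau> \<rho>)"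
proof -
  assume h: "(\<tau>, \<rho>) \<in> Edom"
  show ?thesis
  proof (cases "\<rho> = rhoM a \<tau>")
    case True
    then have "tzero a \<tau> \<rho> = 0" using tzero_eq[of \<tau> 0] h by (simp add: rhoM_def Edom_def)
    then show ?thesis using True by (simp add: g_thth_def E_def a0)
  next
    case False then show ?thesis by (simp add: g_thth_def E_def Let_def)
  qed
qed

lemma gthth_cont:
  assumes hor: "\<And>\<tau>. \<tau> > 0 \<Longrightarrow> (\<lambda>t. 1 / a t) integrable_on {0..\<tau>}"
  shows "continuous_on Edom (\<lambda>p. g_thth k a (fst p) (snd p))"
proof -
  have m: "continuous_on Edom (\<lambda>p. (fst p, tzero a (fst p) (snd p)))"
    by (intro continuous_intros T_cont)
  have "(\<lambda>p. (fst p, tzero a (fst p) (snd p))) ` Edom \<subseteq> Wd"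
  proof
    fix x assume "x \<in> (\<lambda>p. (fst p, tzero a (fst p) (snd p))) ` Edom"
    then obtain \<tau> \<rho> where "(\<tau>, \<rho>) \<in> Edom" "x = (\<tau>, tzero a \<tau> \<rho>)" by auto
    then show "x \<in> Wd" using tzero_props[of \<tau> \<rho>] by (auto simp: Edom_def Wd_def)
  qed
  then have "continuous_on Edom (\<lambda>p. E k (fst p) (tzero a (fst p) (snd p)))"
    using continuous_on_compose2[OF E_cont[OF hor] m] by simp
  then show ?thesis
    by (rule continuous_on_eq) (auto simp: gthth_eq)
qed

end

theorem theorem7p1:
  fixes k :: int and a :: "real \<Rightarrow> real" and th0 ph0 :: real
  assumes "k \<in> {-1, 0, 1}"
    and "regular_scale_factor a"
    and "\<And>t. a (- t) = a t"
    and "\<And>\<tau>. \<tau> > 0 \<Longrightarrow> (\<lambda>t. 1 / a t) integrable_on {0..\<tau>}"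
  shows "(\<forall>\<tau>0>0. ((\<lambda>(\<tau>, t0). (a t0)\<^sup>2 * (S k (chi a \<bar>t0\<bar> \<tau>))\<^sup>2) \<longlongrightarrow> 0)
             (at (\<tau>0, 0) within {(\<tau>, t0). 0 < \<bar>t0\<bar> \<and> \<bar>t0\<bar> < \<tau>}))
       \<and> continuous_on (D_polar a th0 ph0) (\<lambda>(\<tau>, \<rho>, \<theta>, \<phi>). g_thth k a \<tau> \<rho>)
       \<and> continuous_on (D_polar a th0 ph0) (\<lambda>(\<tau>, \<rho>, \<theta>, \<phi>). g_phph k a \<tau> \<rho> \<theta>)
       \<and> (\<forall>\<tau>>0. g_thth k a \<tau> (rhoM a \<tau>) = 0 \<and> (\<forall>\<theta>. g_phph k a \<tau> (rhoM a \<tau>) \<theta> = 0))"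
proof -
  interpret rsf a using assms(2,3) by unfold_locales
  have hor: "\<And>\<tau>. \<tau> > 0 \<Longrightarrow> (\<lambda>t. 1 / a t) integrable_on {0..\<tau>}" by (rule assms(4))
  have eqE: "(\<lambda>(\<tau>, t0). (a t0)\<^sup>2 * (S k (chi a \<bar>t0\<bar> \<tau>))\<^sup>2) = (\<lambda>p. E k (fst p) (snd p))"
    by (simp add: E_def fun_eq_iff)
  have P1: "\<forall>\<tau>0>0. ((\<lambda>(\<tau>, t0). (a t0)\<^sup>2 * (S k (chi a \<bar>t0\<bar> \<tau>))\<^sup>2) \<longlongrightarrow> 0)
             (at (\<tau>0, 0) within {(\<tau>, t0). 0 < \<bar>t0\<bar> \<and> \<bar>t0\<bar> < \<tau>})"
    unfolding eqE using E_tendsto0 hor by simp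
  have sub: "(\<lambda>x. (fst x, fst (snd x))) ` D_polar a th0 ph0 \<subseteq> Edom"
  proof
    fix y assume "y \<in> (\<lambda>x. (fst x, fst (snd x))) ` D_polar a th0 ph0"
    then obtain \<tau> \<rho> \<theta> \<phi> where x: "(\<tau>, \<rho>, \<theta>, \<phi>) \<in> D_polar a th0 ph0" "y = (\<tau>, \<rho>)" by force
    then have "0 < \<tau>" "0 < \<rho>" "\<rho> < rho_max a \<tau>" by (auto simp: D_polar_def)
    then show "y \<in> Edom" using rho_max_le[of \<tau>] x by (auto simp: Edom_def rhoM_def)
  qed
  have c0: "continuous_on (D_polar a th0 ph0) (\<lambda>x. g_thth k a (fst x) (fst (snd x)))"
    using continuous_on_compose2[OF gthth_cont[OF hor] _ sub] by (simp add: continuous_intros)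
  have P2: "continuous_on (D_polar a th0 ph0) (\<lambda>(\<tau>, \<rho>, \<theta>, \<phi>). g_thth k a \<tau> \<rho>)"
    using c0 by (simp add: case_prod_beta)
  have c1: "continuous_on (D_polar a th0 ph0) (\<lambda>x. g_thth k a (fst x) (fst (snd x)) * (sin (fst (snd (snd x))))\<^sup>2)"
    by (intro continuous_intros c0)
  have P3: "continuous_on (D_polar a th0 ph0) (\<lambda>(\<tau>, \<rho>, \<theta>, \<phi>). g_phph k a \<tau> \<rho> \<theta>)"
    using c1 by (simp add: case_prod_beta g_phph_def)
  have P4: "\<forall>\<tau>>0. g_thth k a \<tau> (rhoM a \<tau>) = 0 \<and> (\<forall>\<theta>. g_phph k a \<tau> (rhoM a \<tau>) \<theta> = 0)"
    by (simp add: g_thth_def g_phph_def)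
  show ?thesis using P1 P2 P3 P4 by blast
qed

end
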